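(* Let $p_{d,k,n}$ denote the number of directed plateau polyhypercubes of dimension $d$, width $k$ and lateral area $n$. Then for $d\geq 3$, $k\geq 1$ and $n\geq (d-1)k$, $$p_{d,k,n}=\sum_{j_2+j_3+\cdots+j_d=n}\ \prod_{l=2}^{d}\binom{j_l+k-2}{j_l-k},$$ where the sum is over nonnegative integers $j_2,\dots,j_d$.
   Context: Work in $\mathbb{Z}^d$ with orthonormal coordinate system $(0,\vec{i_1},\dots,\vec{i_d})$; a cell is a unit hypercube of the lattice. A polyhypercube of dimension $d$ is a finite union of cells, connected through their $(d-1)$-dimensional faces, defined up to translation. Its width is the number of distinct values of the $\vec{i_1}$-coordinate taken by its cells; its strata are its intersections with the layers of constant $\vec{i_1}$-coordinate. A plateau is a stratum that is a hyperrectangle. An elementary step is a positive move of one unit along one axis. A polyhypercube is directed if every cell can be reached from a distinguished root cell by a path of cells of the polyhypercube using only elementary steps. A directed plateau polyhypercube is a directed polyhypercube all of whose strata are plateaus. The lateral area of a polyhypercube is the sum, over $2\leq l\leq d$, of the areas (numbers of unit squares) of the polyominoes obtained by projecting it onto the planes $(\vec{i_1},\vec{i_l})$. Convention: for $n\geq 0$, $\binom{n}{k}=0$ when $k<0$ or $k>n$. *)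

theory Defs
  imports Main
begin

text \<open>A cell of Z^d is identified with its lower corner, a function nat => int
  whose coordinates 0..d-1 are meaningful (coordinate 0 is the i_1 axis,
  coordinate l is the i_(l+1) axis) and which vanishes from index d on.\<close>

type_synonym cell = "nat \<Rightarrow> int"

definition cells :: "nat \<Rightarrow> cell set" where
  "cells d = {c. \<forall>i\<ge>d. c i = 0}"

definition step_in :: "nat \<Rightarrow> cell set \<Rightarrow> cell \<Rightarrow> cell \<Rightarrow> bool" where
  "step_in d P x y \<longleftrightarrow> x \<in> P \<and> y \<in> P \<and> (\<exists>i<d. y = x(i := x i + 1))"

definition adj_in :: "nat \<Rightarrow> cell set \<Rightarrow> cell \<Rightarrow> cell \<Rightarrow> bool" where
  "adj_in d P x y \<longleftrightarrow> step_in d P x y \<or> step_in d P y x"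

definition polyhypercube :: "nat \<Rightarrow> cell set \<Rightarrow> bool" where
  "polyhypercube d P \<longleftrightarrow> finite P \<and> P \<noteq> {} \<and> P \<subseteq> cells d \<and>
     (\<forall>x\<in>P. \<forall>y\<in>P. (adj_in d P)\<^sup>*\<^sup>* x y)"

definition directed :: "nat \<Rightarrow> cell set \<Rightarrow> bool" where
  "directed d P \<longleftrightarrow> (\<exists>r\<in>P. \<forall>c\<in>P. (step_in d P)\<^sup>*\<^sup>* r c)"

definition width :: "cell set \<Rightarrow> nat" where
  "width P = card ((\<lambda>c. c 0) ` P)"

definition stratum :: "cell set \<Rightarrow> int \<Rightarrow> cell set" where
  "stratum P a = {c \<in> P. c 0 = a}"

definition plateau :: "nat \<Rightarrow> cell set \<Rightarrow> int \<Rightarrow> bool" where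
  "plateau d P a \<longleftrightarrow> (\<exists>lo hi :: nat \<Rightarrow> int.
     stratum P a = {c \<in> cells d. c 0 = a \<and> (\<forall>i\<in>{1..<d}. lo i \<le> c i \<and> c i \<le> hi i)})"

definition directed_plateau :: "nat \<Rightarrow> cell set \<Rightarrow> bool" where
  "directed_plateau d P \<longleftrightarrow> polyhypercube d P \<and> directed d P \<and>
     (\<forall>a \<in> (\<lambda>c. c 0) ` P. plateau d P a)"

text \<open>Lateral area: sum over l = 2..d (indices 1..d-1 here) of the areas of the
  projections onto the planes (i_1, i_l).\<close>
definition lateral_area :: "nat \<Rightarrow> cell set \<Rightarrow> nat" where
  "lateral_area d P = (\<Sum>l\<in>{1..<d}. card ((\<lambda>c. (c 0, c l)) ` P))"

definition translate :: "cell \<Rightarrow> cell set \<Rightarrow> cell set" where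
  "translate t P = (\<lambda>c. (\<lambda>i. c i + t i)) ` P"

definition transl_class :: "nat \<Rightarrow> cell set \<Rightarrow> cell set set" where
  "transl_class d P = {Q. \<exists>t\<in>cells d. Q = translate t P}"

definition p_count :: "nat \<Rightarrow> nat \<Rightarrow> nat \<Rightarrow> nat" where
  "p_count d k n = card (transl_class d `
     {P. directed_plateau d P \<and> width P = k \<and> lateral_area d P = n})"

definition ibinom :: "int \<Rightarrow> int \<Rightarrow> nat" where
  "ibinom a b = (if 0 \<le> b \<and> b \<le> a then nat a choose nat b else 0)"

end

theory Submission
  imports Defs "HOL-Library.FuncSet"
begin


definition compo :: "nat set \<Rightarrow> nat \<Rightarrow> (nat \<Rightarrow> nat) set" where
  "compo I n = {j. (\<forall>i. i \<notin> I \<longrightarrow> j i = 0) \<and> sum j I = n}"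

lemma compo_finite:
  assumes "finite I" shows "finite (compo I n)"
proof -
  have "compo I n \<subseteq> (\<lambda>f i. if i \<in> I then f i else 0) ` PiE I (\<lambda>_. {..n})"
  proof
    fix j assume j: "j \<in> compo I n"
    have "\<forall>i\<in>I. j i \<le> n"
    proof
      fix i assume "i \<in> I"
      hence "j i \<le> sum j I" using assms by (intro member_le_sum) auto
      thus "j i \<le> n" using j unfolding compo_def by simp
    qed
    hence "restrict j I \<in> PiE I (\<lambda>_. {..n})" by auto
    moreover have "j = (\<lambda>i. if i \<in> I then restrict j I i else 0)"
      using j unfolding compo_def by auto
    ultimately show "j \<in> (\<lambda>f i. if i \<in> I then f i else 0) ` PiE I (\<lambda>_. {..n})" by blast
  qed
  thus ?thesis by (rule finite_subset) (intro finite_imageI finite_PiE assms; simp)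
qed

lemma GLeq:
  assumes "finite I"
  shows "{\<phi>\<in>PiE I S. (\<Sum>i\<in>I. w (\<phi> i)) = n} =
     (\<Union>j\<in>compo I n. PiE I (\<lambda>i. {s\<in>S i. w s = j i}))"
proof (intro equalityI subsetI)
  fix \<phi> assume a: "\<phi> \<in> {\<phi>\<in>PiE I S. (\<Sum>i\<in>I. w (\<phi> i)) = n}"
  define j where "j = (\<lambda>i. if i \<in> I then w (\<phi> i) else 0)"
  have "j \<in> compo I n" using a unfolding compo_def j_def by auto
  moreover have "\<phi> \<in> PiE I (\<lambda>i. {s\<in>S i. w s = j i})" using a unfolding j_def by auto
  ultimately show "\<phi> \<in> (\<Union>j\<in>compo I n. PiE I (\<lambda>i. {s\<in>S i. w s = j i}))" by blast
next
  fix \<phi> assume "\<phi> \<in> (\<Union>j\<in>compo I n. PiE I (\<lambda>i. {s\<in>S i. w s = j i}))"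
  then obtain j where j: "j \<in> compo I n" and p: "\<phi> \<in> PiE I (\<lambda>i. {s\<in>S i. w s = j i})" by blast
  have "(\<Sum>i\<in>I. w (\<phi> i)) = sum j I" using p by (intro sum.cong) auto
  thus "\<phi> \<in> {\<phi>\<in>PiE I S. (\<Sum>i\<in>I. w (\<phi> i)) = n}" using j p unfolding compo_def by auto
qed

lemma GLfin:
  fixes I :: "nat set" and w :: "'a \<Rightarrow> nat"
  assumes "finite I" "\<And>i m. i \<in> I \<Longrightarrow> finite {s\<in>S i. w s = m}"
  shows "finite {\<phi>\<in>PiE I S. (\<Sum>i\<in>I. w (\<phi> i)) = n}"
  unfolding GLeq[OF assms(1)]
  by (intro finite_UN_I compo_finite assms(1) finite_PiE; simp add: assms)

lemma GL:
  fixes I :: "nat set" and w :: "'a \<Rightarrow> nat"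
  assumes "finite I" "\<And>i m. i \<in> I \<Longrightarrow> finite {s\<in>S i. w s = m}"
  shows "card {\<phi>\<in>PiE I S. (\<Sum>i\<in>I. w (\<phi> i)) = n} =
     (\<Sum>j\<in>compo I n. \<Prod>i\<in>I. card {s\<in>S i. w s = j i})"
proof -
  have "card (\<Union>j\<in>compo I n. PiE I (\<lambda>i. {s\<in>S i. w s = j i})) =
     (\<Sum>j\<in>compo I n. card (PiE I (\<lambda>i. {s\<in>S i. w s = j i})))"
  proof (rule card_UN_disjoint)
    show "finite (compo I n)" using compo_finite[OF assms(1)] .
    show "\<forall>j\<in>compo I n. finite (PiE I (\<lambda>i. {s\<in>S i. w s = j i}))"
      using assms(1) by (intro ballI finite_PiE assms(2))
    show "\<forall>j\<in>compo I n. \<forall>j'\<in>compo I n. j \<noteq> j' \<longrightarrow>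
       PiE I (\<lambda>i. {s\<in>S i. w s = j i}) \<inter> PiE I (\<lambda>i. {s\<in>S i. w s = j' i}) = {}"
    proof (intro ballI impI)
      fix j j' assume j: "j \<in> compo I n" and j': "j' \<in> compo I n" and ne: "j \<noteq> j'"
      show "PiE I (\<lambda>i. {s\<in>S i. w s = j i}) \<inter> PiE I (\<lambda>i. {s\<in>S i. w s = j' i}) = {}"
      proof (rule ccontr)
        assume "PiE I (\<lambda>i. {s\<in>S i. w s = j i}) \<inter> PiE I (\<lambda>i. {s\<in>S i. w s = j' i}) \<noteq> {}"
        then obtain \<phi> where "\<phi> \<in> PiE I (\<lambda>i. {s\<in>S i. w s = j i})" "\<phi> \<in> PiE I (\<lambda>i. {s\<in>S i. w s = j' i})" by blast
        hence "\<forall>i\<in>I. j i = j' i" by (auto dest!: PiE_mem)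
        have "j = j'"
        proof
          fix i show "j i = j' i" using \<open>\<forall>i\<in>I. j i = j' i\<close> j j' unfolding compo_def by (cases "i \<in> I") auto
        qed
        thus False using ne by simp
      qed
    qed
  qed
  thus ?thesis unfolding GLeq[OF assms(1)] using assms(1) by (simp add: card_PiE)
qed

lemma CV:
  fixes f :: "nat \<Rightarrow> nat \<Rightarrow> nat"
  assumes "finite I" "i \<notin> I"
  shows "(\<Sum>j\<in>compo (insert i I) n. \<Prod>t\<in>insert i I. f t (j t)) =
     (\<Sum>a\<le>n. f i a * (\<Sum>j\<in>compo I (n - a). \<Prod>t\<in>I. f t (j t)))"
proof -
  have "(\<Sum>a\<le>n. f i a * (\<Sum>j\<in>compo I (n - a). \<Prod>t\<in>I. f t (j t))) =
      (\<Sum>a\<le>n. (\<Sum>j\<in>compo I (n - a). f i a * (\<Prod>t\<in>I. f t (j t))))"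
    by (rule sum.cong[OF refl]) (rule sum_distrib_left)
  also have "\<dots> = (\<Sum>(a,j)\<in>Sigma {..n} (\<lambda>a. compo I (n - a)). f i a * (\<Prod>t\<in>I. f t (j t)))"
    by (rule sum.Sigma) (auto intro: compo_finite[OF assms(1)])
  also have "\<dots> = (\<Sum>j\<in>compo (insert i I) n. \<Prod>t\<in>insert i I. f t (j t))"
  proof (rule sum.reindex_bij_witness[where i = "\<lambda>j. (j i, j(i:=0))" and j = "\<lambda>(a,j). j(i:=a)"])
    fix p assume "p \<in> Sigma {..n} (\<lambda>a. compo I (n - a))"
    then obtain a j where p: "p = (a,j)" "a \<le> n" "j \<in> compo I (n - a)" by auto
    have ji: "j i = 0" using p(3) assms(2) unfolding compo_def by auto
    show "(\<lambda>j. (j i, j(i := 0))) ((\<lambda>(a, j). j(i := a)) p) = p" using p ji by auto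
    have e1: "sum (j(i:=a)) I = sum j I" using assms(2) by (intro sum.cong) auto
    have "sum (j(i:=a)) (insert i I) = a + sum j I"
      using assms e1 by (simp add: sum.insert)
    thus "(\<lambda>(a, j). j(i := a)) p \<in> compo (insert i I) n" using p unfolding compo_def by auto
    have e2: "(\<Prod>t\<in>I. f t ((j(i:=a)) t)) = (\<Prod>t\<in>I. f t (j t))" using assms(2) by (intro prod.cong) auto
    have "(\<Prod>t\<in>insert i I. f t ((j(i:=a)) t)) = f i a * (\<Prod>t\<in>I. f t (j t))"
      using assms e2 by (simp add: prod.insert)
    thus "(\<Prod>t\<in>insert i I. f t ((\<lambda>(a, j). j(i := a)) p t)) =
         (case p of (a, j) \<Rightarrow> f i a * (\<Prod>t\<in>I. f t (j t)))" using p by simp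
  next
    fix j assume j: "j \<in> compo (insert i I) n"
    have s: "sum j (insert i I) = j i + sum j I" using assms by simp
    show "(\<lambda>(a, j). j(i := a)) (j i, j(i := 0)) = j" by auto
    have "sum (j(i:=0)) I = sum j I" using assms by (intro sum.cong) auto
    thus "(j i, j(i := 0)) \<in> Sigma {..n} (\<lambda>a. compo I (n - a))"
      using j s unfolding compo_def by auto
  qed
  finally show ?thesis ..
qed

lemma compo_empty: "compo {} n = (if n = 0 then {\<lambda>_. 0} else {})"
  unfolding compo_def by auto

lemma L1: "c < r \<Longrightarrow> (\<Sum>b<m. (b + c) choose r) = (m + c) choose (Suc r)"
  by (induction m) auto

lemma L2:
  assumes "c < r"
  shows "(\<Sum>a\<le>x. a * ((x - a + c) choose r)) = (x + c + 1) choose (r + 2)"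
proof (induction x)
  case 0 thus ?case using assms by simp
next
  case (Suc x)
  have "(\<Sum>a\<le>Suc x. a * ((Suc x - a + c) choose r)) =
        (\<Sum>a\<le>x. Suc a * ((x - a + c) choose r))"
    by (subst sum.atMost_Suc_shift) simp
  also have "\<dots> = (\<Sum>a\<le>x. a * ((x - a + c) choose r)) + (\<Sum>a\<le>x. (x - a + c) choose r)"
    by (simp add: sum.distrib)
  also have "(\<Sum>a\<le>x. (x - a + c) choose r) = (\<Sum>b<Suc x. (b + c) choose r)"
  proof -
    have "(\<Sum>a\<le>x. (x - a + c) choose r) = (\<Sum>a<Suc x. (Suc x - Suc a + c) choose r)"
      by (simp add: lessThan_Suc_atMost)
    also have "\<dots> = (\<Sum>b<Suc x. (b + c) choose r)"
      by (rule sum.nat_diff_reindex[where g = "\<lambda>b. (b + c) choose r"])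
    finally show ?thesis .
  qed
  also have "\<dots> = (Suc x + c) choose Suc r" using L1 assms by blast
  finally show ?case using Suc by simp
qed


definition TT :: "nat \<Rightarrow> nat \<Rightarrow> (nat \<times> nat) set" where
  "TT k t = {(h,e). 1 \<le> h \<and> (if t < k - 1 then e < h else e = 0)}"

definition wt :: "nat \<Rightarrow> (nat \<Rightarrow> nat \<times> nat) \<Rightarrow> nat" where
  "wt k col = (\<Sum>t<k. fst (col t))"

definition cc :: "nat \<Rightarrow> nat \<Rightarrow> nat \<Rightarrow> nat" where
  "cc k t a = (if t < k - 1 then a else if 1 \<le> a then 1 else 0)"

lemma TT_fiber: "{p\<in>TT k t. fst p = a} =
   (if t < k - 1 then (if 1 \<le> a then {a} \<times> {..<a} else {}) else (if 1 \<le> a then {(a,0)} else {}))"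
  unfolding TT_def by auto

lemma TT_fiber_finite: "finite {p\<in>TT k t. fst p = a}"
  unfolding TT_fiber by auto

lemma TT_fiber_card: "card {p\<in>TT k t. fst p = a} = cc k t a"
  unfolding TT_fiber cc_def by auto

definition W :: "nat \<Rightarrow> nat \<Rightarrow> nat" where
  "W k x = (\<Sum>j\<in>compo {..<k} x. \<Prod>t<k. j t)"

lemma W0: "W 0 x = (if x = 0 then 1 else 0)"
  unfolding W_def by (simp add: compo_empty)

lemma W_Suc: "W (Suc k) x = (\<Sum>a\<le>x. a * W k (x - a))"
proof -
  have "W (Suc k) x = (\<Sum>j\<in>compo (insert k {..<k}) x. \<Prod>t\<in>insert k {..<k}. (\<lambda>t a. a) t (j t))"
    unfolding W_def by (simp add: lessThan_Suc)
  also have "\<dots> = (\<Sum>a\<le>x. a * W k (x - a))"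
    by (subst CV) (auto simp: W_def)
  finally show ?thesis .
qed

lemma sum_shift1: fixes m :: nat shows "(\<Sum>a\<le>m. (if 1 \<le> a then (1::nat) else 0) * g (m - a)) = (\<Sum>b<m. g b)"
proof (cases m)
  case 0 thus ?thesis by simp
next
  case (Suc m')
  have "(\<Sum>a\<le>m. (if 1 \<le> a then (1::nat) else 0) * g (m - a)) = (\<Sum>a\<le>m'. g (m' - a))"
    unfolding Suc by (subst sum.atMost_Suc_shift) simp
  also have "\<dots> = (\<Sum>a<Suc m'. g (Suc m' - Suc a))" by (simp add: lessThan_Suc_atMost)
  also have "\<dots> = (\<Sum>b<Suc m'. g b)" by (rule sum.nat_diff_reindex)
  finally show ?thesis using Suc by simp
qed

lemma W_form: "1 \<le> k \<Longrightarrow> W k x = (x + k - 1) choose (2 * k - 1)"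
proof (induction k arbitrary: x rule: nat_induct_at_least)
  case base
  have "W 1 x = (\<Sum>a\<le>x. a * (if x - a = 0 then 1 else 0))" by (simp add: W_Suc W0)
  also have "\<dots> = (\<Sum>a\<le>x. if a = x then a else 0)" by (intro sum.cong) auto
  also have "\<dots> = x" by simp
  finally show ?case by simp
next
  case (Suc k)
  have "W (Suc k) x = (\<Sum>a\<le>x. a * ((x - a + (k - 1)) choose (2 * k - 1)))"
    unfolding W_Suc using Suc by (intro sum.cong) (auto simp: algebra_simps)
  also have "\<dots> = (x + (k - 1) + 1) choose (2 * k - 1 + 2)" using Suc by (intro L2) auto
  finally show ?case using Suc by (simp add: algebra_simps)
qed

lemma col_sum: "1 \<le> k \<Longrightarrow> (\<Sum>j\<in>compo {..<k} m. \<Prod>t<k. cc k t (j t)) =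
   ibinom (int m + int k - 2) (int m - int k)"
proof -
  assume k: "1 \<le> k"
  have kk: "{..<k} = insert (k - 1) {..<k - 1}" using k by auto
  have "(\<Sum>j\<in>compo {..<k} m. \<Prod>t<k. cc k t (j t)) =
     (\<Sum>j\<in>compo (insert (k - 1) {..<k - 1}) m. \<Prod>t\<in>insert (k - 1) {..<k - 1}. cc k t (j t))"
    by (simp only: kk)
  also have "\<dots> = (\<Sum>a\<le>m. cc k (k - 1) a * (\<Sum>j\<in>compo {..<k - 1} (m - a). \<Prod>t<k - 1. cc k t (j t)))"
    by (rule CV) auto
  also have "\<dots> = (\<Sum>a\<le>m. (if 1 \<le> a then 1 else 0) * W (k - 1) (m - a))"
    unfolding W_def by (intro sum.cong refl arg_cong2[where f = "(*)"] prod.cong) (auto simp: cc_def)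
  also have "\<dots> = (\<Sum>b<m. W (k - 1) b)" by (rule sum_shift1)
  also have "\<dots> = ibinom (int m + int k - 2) (int m - int k)"
  proof (cases "k = 1")
    case True
    have "(\<Sum>b<m. W 0 b) = (\<Sum>b<m. if b = 0 then 1 else 0)" by (simp add: W0)
    also have "\<dots> = (if 1 \<le> m then 1 else 0)" by simp
    also have "\<dots> = ibinom (int m + int k - 2) (int m - int k)"
    proof (cases "m = 0")
      case True thus ?thesis using \<open>k = 1\<close> by (simp add: ibinom_def)
    next
      case False
      hence "int m + int k - 2 = int m - int k" "0 \<le> int m - int k" using \<open>k = 1\<close> by auto
      thus ?thesis using False unfolding ibinom_def by simp
    qed
    finally show ?thesis using True by simp
  next
    case False
    define k' where "k' = k - 1"
    have k': "1 \<le> k'" "k = Suc k'" using k False unfolding k'_def by auto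
    have "(\<Sum>b<m. W (k - 1) b) = (\<Sum>b<m. (b + (k' - 1)) choose (2 * k' - 1))"
    proof (rule sum.cong[OF refl])
      fix b show "W (k - 1) b = (b + (k' - 1)) choose (2 * k' - 1)"
      proof -
        have "b + k' - 1 = b + (k' - 1)" using k'(1) by simp
        thus ?thesis using W_form[OF k'(1), of b] k'(2) by simp
      qed
    qed
    also have "\<dots> = (m + (k' - 1)) choose Suc (2 * k' - 1)" using k' by (intro L1) auto
    also have "\<dots> = (m + k' - 1) choose (2 * k')" using k' by simp
    also have "\<dots> = ibinom (int m + int k - 2) (int m - int k)"
    proof (cases "k' + 1 \<le> m")
      case True
      have "(m + k' - 1) choose (2 * k') = (m + k' - 1) choose (m + k' - 1 - 2 * k')"
        using True by (intro binomial_symmetric) auto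
      moreover have "nat (int m + int k - 2) = m + k' - 1" "nat (int m - int k) = m + k' - 1 - 2 * k'"
        using True k' by auto
      ultimately show ?thesis using True k' unfolding ibinom_def by auto
    next
      case False
      thus ?thesis using k' unfolding ibinom_def by (auto simp: binomial_eq_0)
    qed
    finally show ?thesis .
  qed
  finally show ?thesis .
qed

lemma col_fin: "finite {col \<in> PiE {..<k} (TT k). wt k col = m}"
  unfolding wt_def by (rule GLfin) (auto simp: TT_fiber_finite)

lemma col_count: "1 \<le> k \<Longrightarrow> card {col \<in> PiE {..<k} (TT k). wt k col = m} =
   ibinom (int m + int k - 2) (int m - int k)"
  unfolding wt_def
  by (subst GL) (auto simp: TT_fiber_finite TT_fiber_card col_sum)



definition loc :: "(nat \<Rightarrow> nat \<times> nat) \<Rightarrow> nat \<Rightarrow> int" where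
  "loc col t = int (\<Sum>s<t. snd (col s))"

definition hic :: "(nat \<Rightarrow> nat \<times> nat) \<Rightarrow> nat \<Rightarrow> int" where
  "hic col t = loc col t + int (fst (col t)) - 1"

definition Build :: "nat \<Rightarrow> nat \<Rightarrow> (nat \<Rightarrow> nat \<Rightarrow> nat \<times> nat) \<Rightarrow> cell set" where
  "Build d k \<phi> = {c \<in> cells d. 0 \<le> c 0 \<and> c 0 < int k \<and>
      (\<forall>l\<in>{1..<d}. loc (\<phi> l) (nat (c 0)) \<le> c l \<and> c l \<le> hic (\<phi> l) (nat (c 0)))}"

definition Valid :: "nat \<Rightarrow> nat \<Rightarrow> (nat \<Rightarrow> nat \<Rightarrow> nat \<times> nat) set" where
  "Valid d k = PiE {1..<d} (\<lambda>l. PiE {..<k} (TT k))"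

definition pt :: "nat \<Rightarrow> int \<Rightarrow> (nat \<Rightarrow> int) \<Rightarrow> cell" where
  "pt d a f = (\<lambda>i. if i = 0 then a else if i \<in> {1..<d} then f i else 0)"

lemma pt_cells: "1 \<le> d \<Longrightarrow> pt d a f \<in> cells d"
  unfolding pt_def cells_def by auto

lemma pt0[simp]: "pt d a f 0 = a" unfolding pt_def by simp
lemma ptl[simp]: "l \<in> {1..<d} \<Longrightarrow> pt d a f l = f l" unfolding pt_def by simp

lemma loc0[simp]: "loc col 0 = 0" unfolding loc_def by simp
lemma locSuc: "loc col (Suc t) = loc col t + int (snd (col t))" unfolding loc_def by simp

lemma Valid_TT: "\<phi> \<in> Valid d k \<Longrightarrow> l \<in> {1..<d} \<Longrightarrow> t < k \<Longrightarrow> \<phi> l t \<in> TT k t"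
  unfolding Valid_def by auto

lemma Valid_h: "\<phi> \<in> Valid d k \<Longrightarrow> l \<in> {1..<d} \<Longrightarrow> t < k \<Longrightarrow> loc (\<phi> l) t \<le> hic (\<phi> l) t"
  using Valid_TT[of \<phi> d k l t] unfolding hic_def TT_def by auto

lemma Valid_chain:
  assumes "\<phi> \<in> Valid d k" "l \<in> {1..<d}" "Suc t < k"
  shows "loc (\<phi> l) t \<le> loc (\<phi> l) (Suc t)" "loc (\<phi> l) (Suc t) \<le> hic (\<phi> l) t"
proof -
  have "\<phi> l t \<in> TT k t" using Valid_TT assms by simp
  hence "snd (\<phi> l t) < fst (\<phi> l t)" using assms(3) unfolding TT_def by auto
  thus "loc (\<phi> l) t \<le> loc (\<phi> l) (Suc t)" "loc (\<phi> l) (Suc t) \<le> hic (\<phi> l) t"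
    unfolding locSuc hic_def by auto
qed

lemma in_Build:
  "c \<in> Build d k \<phi> \<longleftrightarrow> c \<in> cells d \<and> 0 \<le> c 0 \<and> c 0 < int k \<and>
      (\<forall>l\<in>{1..<d}. loc (\<phi> l) (nat (c 0)) \<le> c l \<and> c l \<le> hic (\<phi> l) (nat (c 0)))"
  unfolding Build_def by simp

lemma pt_Build:
  assumes "1 \<le> d" "t < k" "\<And>l. l \<in> {1..<d} \<Longrightarrow> loc (\<phi> l) t \<le> f l \<and> f l \<le> hic (\<phi> l) t"
  shows "pt d (int t) f \<in> Build d k \<phi>"
  using assms pt_cells[OF assms(1)] unfolding in_Build by auto

lemma cells_eqI:
  assumes "x \<in> cells d" "y \<in> cells d" "\<And>i. i < d \<Longrightarrow> x i = y i"
  shows "x = y"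
proof
  fix i show "x i = y i" using assms unfolding cells_def by (cases "i < d") auto
qed

lemma walk:
  fixes B :: "cell set"
  assumes conv: "\<And>x y z. x \<in> B \<Longrightarrow> y \<in> B \<Longrightarrow> z \<in> cells d \<Longrightarrow> z 0 = x 0 \<Longrightarrow> x 0 = y 0 \<Longrightarrow>
      (\<And>i. x i \<le> z i \<and> z i \<le> y i) \<Longrightarrow> z \<in> B"
    and sub: "B \<subseteq> cells d"
  shows "x \<in> B \<Longrightarrow> y \<in> B \<Longrightarrow> x 0 = y 0 \<Longrightarrow> (\<And>i. x i \<le> y i) \<Longrightarrow> (step_in d B)\<^sup>*\<^sup>* x y"
proof -
  have main: "\<And>x. x \<in> B \<Longrightarrow> x 0 = y 0 \<Longrightarrow> (\<forall>i. x i \<le> y i) \<Longrightarrow> (\<Sum>i<d. nat (y i - x i)) = N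
      \<Longrightarrow> (step_in d B)\<^sup>*\<^sup>* x y" if yB: "y \<in> B" for N
  proof (induction N)
    case 0
    have "x = y"
    proof (rule cells_eqI[of x d y])
      show "x \<in> cells d" "y \<in> cells d" using 0 yB sub by auto
      fix i assume "i < d"
      hence "nat (y i - x i) = 0" using 0(4) by simp
      thus "x i = y i" using 0(3) by (metis diff_ge_0_iff_ge eq_iff_diff_eq_0 nat_0_iff order_antisym)
    qed
    thus ?case by simp
  next
    case (Suc N x)
    have "\<exists>i<d. x i < y i"
    proof (rule ccontr)
      assume "\<not> ?thesis"
      hence "\<forall>i<d. nat (y i - x i) = 0" by auto
      hence "(\<Sum>i<d. nat (y i - x i)) = 0" by simp
      thus False using Suc(5) by simp
    qed
    then obtain i where i: "i < d" "x i < y i" by blast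
    have i0: "i \<noteq> 0" using i Suc(3) by (metis less_irrefl)
    define x' where "x' = x(i := x i + 1)"
    have x'c: "x' \<in> cells d" using Suc(2) sub i unfolding x'_def cells_def by auto
    have x'B: "x' \<in> B"
      by (rule conv[OF Suc(2) yB x'c]) (use Suc(3,4) i i0 in \<open>auto simp: x'_def\<close>)
    have st: "step_in d B x x'" unfolding step_in_def x'_def using Suc(2) x'B i x'_def by auto
    have "(\<Sum>j<d. nat (y j - x j)) = nat (y i - x i) + (\<Sum>j\<in>{..<d} - {i}. nat (y j - x j))"
      using i by (simp add: sum.remove)
    moreover have "(\<Sum>j<d. nat (y j - x' j)) = nat (y i - x' i) + (\<Sum>j\<in>{..<d} - {i}. nat (y j - x' j))"
      using i by (simp add: sum.remove)
    moreover have "(\<Sum>j\<in>{..<d} - {i}. nat (y j - x' j)) = (\<Sum>j\<in>{..<d} - {i}. nat (y j - x j))"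
      unfolding x'_def by (intro sum.cong) auto
    moreover have "nat (y i - x' i) + 1 = nat (y i - x i)" using i unfolding x'_def by auto
    ultimately have "(\<Sum>j<d. nat (y j - x' j)) = N" using Suc(5) by simp
    moreover have "\<forall>j. x' j \<le> y j" using Suc(4) i unfolding x'_def by auto
    moreover have "x' 0 = y 0" using Suc(3) i0 unfolding x'_def by simp
    ultimately have "(step_in d B)\<^sup>*\<^sup>* x' y" using Suc.IH x'B by blast
    with st show ?case by (rule converse_rtranclp_into_rtranclp)
  qed
  assume "x \<in> B" "y \<in> B" "x 0 = y 0" "\<And>i. x i \<le> y i"
  thus ?thesis using main by blast
qed



lemma Build_sub: "Build d k \<phi> \<subseteq> cells d" unfolding Build_def by auto

lemma Build_conv:
  assumes "x \<in> Build d k \<phi>" "y \<in> Build d k \<phi>" "z \<in> cells d" "z 0 = x 0" "x 0 = y 0"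
    "\<And>i. x i \<le> z i \<and> z i \<le> y i"
  shows "z \<in> Build d k \<phi>"
proof -
  have "\<forall>l\<in>{1..<d}. loc (\<phi> l) (nat (z 0)) \<le> z l \<and> z l \<le> hic (\<phi> l) (nat (z 0))"
  proof
    fix l assume l: "l \<in> {1..<d}"
    have "loc (\<phi> l) (nat (x 0)) \<le> x l" "y l \<le> hic (\<phi> l) (nat (y 0))"
      using assms(1,2) l unfolding in_Build by auto
    thus "loc (\<phi> l) (nat (z 0)) \<le> z l \<and> z l \<le> hic (\<phi> l) (nat (z 0))"
      using assms(4,5) assms(6)[of l] by auto
  qed
  thus ?thesis using assms(1,3,4) unfolding in_Build by auto
qed

lemma Build_walk:
  assumes "x \<in> Build d k \<phi>" "y \<in> Build d k \<phi>" "x 0 = y 0" "\<And>i. x i \<le> y i"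
  shows "(step_in d (Build d k \<phi>))\<^sup>*\<^sup>* x y"
proof (rule walk[where B="Build d k \<phi>" and d=d])
  fix x y z assume "x \<in> Build d k \<phi>" "y \<in> Build d k \<phi>" "z \<in> cells d" "z 0 = x 0" "x 0 = y 0"
    "\<And>i. x i \<le> z i \<and> z i \<le> y i"
  thus "z \<in> Build d k \<phi>" by (rule Build_conv)
qed (simp_all add: assms Build_sub)

definition cor :: "nat \<Rightarrow> (nat \<Rightarrow> nat \<Rightarrow> nat \<times> nat) \<Rightarrow> nat \<Rightarrow> cell" where
  "cor d \<phi> t = pt d (int t) (\<lambda>l. loc (\<phi> l) t)"

definition tcor :: "nat \<Rightarrow> (nat \<Rightarrow> nat \<Rightarrow> nat \<times> nat) \<Rightarrow> nat \<Rightarrow> cell" where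
  "tcor d \<phi> t = pt d (int t) (\<lambda>l. hic (\<phi> l) t)"

lemma cor_Build: "\<phi> \<in> Valid d k \<Longrightarrow> 1 \<le> d \<Longrightarrow> t < k \<Longrightarrow> cor d \<phi> t \<in> Build d k \<phi>"
  unfolding cor_def by (rule pt_Build) (auto simp: Valid_h)

lemma tcor_Build: "\<phi> \<in> Valid d k \<Longrightarrow> 1 \<le> d \<Longrightarrow> t < k \<Longrightarrow> tcor d \<phi> t \<in> Build d k \<phi>"
  unfolding tcor_def by (rule pt_Build) (auto simp: Valid_h)

lemma cor0: "cor d \<phi> 0 = (\<lambda>_. 0)"
  unfolding cor_def pt_def by auto

lemma cor_reach:
  assumes V: "\<phi> \<in> Valid d k" and d: "1 \<le> d"
  shows "t < k \<Longrightarrow> (step_in d (Build d k \<phi>))\<^sup>*\<^sup>* (\<lambda>_. 0) (cor d \<phi> t)"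
proof (induction t)
  case 0 thus ?case by (simp add: cor0)
next
  case (Suc t)
  define m where "m = pt d (int t) (\<lambda>l. loc (\<phi> l) (Suc t))"
  have mB: "m \<in> Build d k \<phi>" unfolding m_def
    by (rule pt_Build) (use d Suc(2) Valid_chain[OF V] in auto)
  have cB: "cor d \<phi> t \<in> Build d k \<phi>" using cor_Build[OF V d] Suc(2) by simp
  have w: "(step_in d (Build d k \<phi>))\<^sup>*\<^sup>* (cor d \<phi> t) m"
  proof (rule Build_walk[OF cB mB])
    show "cor d \<phi> t 0 = m 0" unfolding cor_def m_def by simp
    fix i show "cor d \<phi> t i \<le> m i"
      unfolding cor_def m_def pt_def using Valid_chain(1)[OF V _ Suc(2)] by auto
  qed
  have e: "cor d \<phi> (Suc t) = m(0 := m 0 + 1)"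
    unfolding cor_def m_def pt_def by auto
  have "\<exists>i<d. cor d \<phi> (Suc t) = m(i := m i + 1)" using e d by (intro exI[of _ 0]) auto
  hence "step_in d (Build d k \<phi>) m (cor d \<phi> (Suc t))"
    unfolding step_in_def using mB cor_Build[OF V d Suc(2)] by blast
  moreover have "(step_in d (Build d k \<phi>))\<^sup>*\<^sup>* (\<lambda>_. 0) (cor d \<phi> t)" using Suc.IH Suc(2) by simp
  hence "(step_in d (Build d k \<phi>))\<^sup>*\<^sup>* (\<lambda>_. 0) m" using w by (rule rtranclp_trans)
  ultimately show ?case by (simp add: rtranclp.rtrancl_into_rtrancl)
qed

lemma reach_all:
  assumes V: "\<phi> \<in> Valid d k" and d: "1 \<le> d" and c: "c \<in> Build d k \<phi>"
  shows "(step_in d (Build d k \<phi>))\<^sup>*\<^sup>* (\<lambda>_. 0) c"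
proof -
  define t where "t = nat (c 0)"
  have t: "t < k" "c 0 = int t" using c unfolding in_Build t_def by auto
  have cB: "cor d \<phi> t \<in> Build d k \<phi>" using cor_Build[OF V d t(1)] .
  have "(step_in d (Build d k \<phi>))\<^sup>*\<^sup>* (cor d \<phi> t) c"
  proof (rule Build_walk[OF cB c])
    show "cor d \<phi> t 0 = c 0" using t unfolding cor_def by simp
    fix i show "cor d \<phi> t i \<le> c i"
      using c t unfolding cor_def pt_def in_Build cells_def by auto
  qed
  with cor_reach[OF V d t(1)] show ?thesis by (rule rtranclp_trans)
qed



lemma fin_cells:
  assumes "\<And>i. i < d \<Longrightarrow> finite (S i)"
  shows "finite {c :: cell. (\<forall>i<d. c i \<in> S i) \<and> (\<forall>i\<ge>d. c i = 0)}"
proof -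
  have "{c :: cell. (\<forall>i<d. c i \<in> S i) \<and> (\<forall>i\<ge>d. c i = 0)} \<subseteq>
      (\<lambda>f i. if i < d then f i else 0) ` PiE {..<d} S"
  proof
    fix c :: cell assume c: "c \<in> {c. (\<forall>i<d. c i \<in> S i) \<and> (\<forall>i\<ge>d. c i = 0)}"
    have "restrict c {..<d} \<in> PiE {..<d} S" using c by auto
    moreover have "c = (\<lambda>i. if i < d then restrict c {..<d} i else 0)" using c by auto
    ultimately show "c \<in> (\<lambda>f i. if i < d then f i else 0) ` PiE {..<d} S" by blast
  qed
  moreover have "finite (PiE {..<d} S)" by (rule finite_PiE) (auto simp: assms)
  ultimately show ?thesis by (rule finite_subset[OF _ finite_imageI])
qed

lemma Build_finite: "finite (Build d k \<phi>)"
proof -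
  define S where "S i = (if i = 0 then {0..<int k} else (\<Union>t<k. {loc (\<phi> i) t..hic (\<phi> i) t}))" for i
  have "Build d k \<phi> \<subseteq> {c :: cell. (\<forall>i<d. c i \<in> S i) \<and> (\<forall>i\<ge>d. c i = 0)}"
  proof
    fix c assume c: "c \<in> Build d k \<phi>"
    have "\<forall>i<d. c i \<in> S i"
    proof (intro allI impI)
      fix i assume i: "i < d"
      show "c i \<in> S i"
      proof (cases "i = 0")
        case True thus ?thesis using c unfolding S_def in_Build by auto
      next
        case False
        hence "i \<in> {1..<d}" using i by auto
        hence "c i \<in> {loc (\<phi> i) (nat (c 0))..hic (\<phi> i) (nat (c 0))}" "nat (c 0) < k"
          using c unfolding in_Build by auto
        thus ?thesis unfolding S_def using False by (simp only: if_False) (rule UN_I[of "nat (c 0)"]; simp)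
      qed
    qed
    thus "c \<in> {c :: cell. (\<forall>i<d. c i \<in> S i) \<and> (\<forall>i\<ge>d. c i = 0)}"
      using c unfolding in_Build cells_def by auto
  qed
  moreover have "finite {c :: cell. (\<forall>i<d. c i \<in> S i) \<and> (\<forall>i\<ge>d. c i = 0)}"
    by (rule fin_cells) (auto simp: S_def)
  ultimately show ?thesis by (rule finite_subset)
qed

lemma step_adj:
  assumes "(step_in d P)\<^sup>*\<^sup>* a b"
  shows "(adj_in d P)\<^sup>*\<^sup>* a b \<and> (adj_in d P)\<^sup>*\<^sup>* b a"
  using assms
proof (induction rule: rtranclp_induct)
  case base thus ?case by simp
next
  case (step y z)
  have "adj_in d P y z" "adj_in d P z y" using step(2) unfolding adj_in_def by auto
  have "(adj_in d P)\<^sup>*\<^sup>* a z" using step(3) \<open>adj_in d P y z\<close> by (meson rtranclp.rtrancl_into_rtrancl)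
  moreover have "(adj_in d P)\<^sup>*\<^sup>* z a" using step(3) \<open>adj_in d P z y\<close> by (meson converse_rtranclp_into_rtranclp)
  ultimately show ?case by simp
qed

lemma zero_Build: "\<phi> \<in> Valid d k \<Longrightarrow> 1 \<le> d \<Longrightarrow> 1 \<le> k \<Longrightarrow> (\<lambda>_. 0) \<in> Build d k \<phi>"
  using cor_Build[of \<phi> d k 0] by (simp add: cor0)

lemma Build_levels: "\<phi> \<in> Valid d k \<Longrightarrow> 1 \<le> d \<Longrightarrow> (\<lambda>c. c 0) ` Build d k \<phi> = {0..<int k}"
proof (intro equalityI subsetI)
  fix a assume "a \<in> (\<lambda>c. c 0) ` Build d k \<phi>"
  then obtain c where "c \<in> Build d k \<phi>" "a = c 0" by blast
  thus "a \<in> {0..<int k}" using in_Build[of c d k \<phi>] by simp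
next
  fix a assume a: "a \<in> {0..<int k}" and V: "\<phi> \<in> Valid d k" and d: "1 \<le> d"
  hence "cor d \<phi> (nat a) \<in> Build d k \<phi>" using cor_Build by auto
  moreover have "cor d \<phi> (nat a) 0 = a" using a unfolding cor_def by simp
  ultimately show "a \<in> (\<lambda>c. c 0) ` Build d k \<phi>" by (intro rev_image_eqI[of "cor d \<phi> (nat a)"]) auto
qed

lemma Build_proj:
  assumes V: "\<phi> \<in> Valid d k" and l: "l \<in> {1..<d}"
  shows "(\<lambda>c. (c 0, c l)) ` Build d k \<phi> = (\<Union>t<k. {int t} \<times> {loc (\<phi> l) t..hic (\<phi> l) t})"
proof (intro equalityI subsetI)
  fix p assume "p \<in> (\<lambda>c. (c 0, c l)) ` Build d k \<phi>"
  then obtain c where c: "c \<in> Build d k \<phi>" "p = (c 0, c l)" by blast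
  have "c \<in> cells d \<and> 0 \<le> c 0 \<and> c 0 < int k \<and>
      (\<forall>l\<in>{1..<d}. loc (\<phi> l) (nat (c 0)) \<le> c l \<and> c l \<le> hic (\<phi> l) (nat (c 0)))"
    using c(1) unfolding in_Build .
  hence "nat (c 0) < k" "int (nat (c 0)) = c 0" "loc (\<phi> l) (nat (c 0)) \<le> c l" "c l \<le> hic (\<phi> l) (nat (c 0))"
    using l by auto
  thus "p \<in> (\<Union>t<k. {int t} \<times> {loc (\<phi> l) t..hic (\<phi> l) t})"
    unfolding c(2) by (intro UN_I[of "nat (c 0)"]) auto
next
  fix p assume "p \<in> (\<Union>t<k. {int t} \<times> {loc (\<phi> l) t..hic (\<phi> l) t})"
  then obtain t where t: "t < k" "p \<in> {int t} \<times> {loc (\<phi> l) t..hic (\<phi> l) t}" by blast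
  then obtain y where p: "t < k" "p = (int t, y)" "loc (\<phi> l) t \<le> y" "y \<le> hic (\<phi> l) t" by (cases p) auto
  define c where "c = pt d (int t) ((\<lambda>i. loc (\<phi> i) t)(l := y))"
  have "c \<in> Build d k \<phi>" unfolding c_def
  proof (rule pt_Build)
    show "1 \<le> d" using l by simp
    show "t < k" by (rule p(1))
    fix l' assume l': "l' \<in> {1..<d}"
    show "loc (\<phi> l') t \<le> ((\<lambda>i. loc (\<phi> i) t)(l := y)) l' \<and> ((\<lambda>i. loc (\<phi> i) t)(l := y)) l' \<le> hic (\<phi> l') t"
    proof (cases "l' = l")
      case True thus ?thesis using p(3,4) by simp
    next
      case False thus ?thesis using Valid_h[OF V l' p(1)] by simp
    qed
  qed
  moreover have "(c 0, c l) = p" using p(2) l unfolding c_def pt_def by simp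
  ultimately show "p \<in> (\<lambda>c. (c 0, c l)) ` Build d k \<phi>" by (intro rev_image_eqI[of c]) auto
qed

lemma Build_proj_card:
  assumes V: "\<phi> \<in> Valid d k" and l: "l \<in> {1..<d}"
  shows "card ((\<lambda>c. (c 0, c l)) ` Build d k \<phi>) = wt k (\<phi> l)"
proof -
  have "card (\<Union>t<k. {int t} \<times> {loc (\<phi> l) t..hic (\<phi> l) t}) =
      (\<Sum>t<k. card ({int t} \<times> {loc (\<phi> l) t..hic (\<phi> l) t}))"
    by (rule card_UN_disjoint) auto
  also have "\<dots> = (\<Sum>t<k. fst (\<phi> l t))"
  proof (rule sum.cong[OF refl])
    fix t assume t: "t \<in> {..<k}"
    have "\<phi> l t \<in> TT k t" using Valid_TT[OF V l] t by simp
    hence "1 \<le> fst (\<phi> l t)" unfolding TT_def by (cases "\<phi> l t") auto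
    thus "card ({int t} \<times> {loc (\<phi> l) t..hic (\<phi> l) t}) = fst (\<phi> l t)"
      by (simp add: card_cartesian_product hic_def)
  qed
  finally show ?thesis unfolding Build_proj[OF V l] wt_def .
qed

lemma Build_good:
  assumes V: "\<phi> \<in> Valid d k" and d: "2 \<le> d" and k: "1 \<le> k"
  shows "directed_plateau d (Build d k \<phi>)" "width (Build d k \<phi>) = k"
    "lateral_area d (Build d k \<phi>) = (\<Sum>l\<in>{1..<d}. wt k (\<phi> l))"
proof -
  let ?B = "Build d k \<phi>"
  have d1: "1 \<le> d" using d by simp
  have z: "(\<lambda>_. 0) \<in> ?B" using zero_Build[OF V d1 k] .
  have reach: "\<forall>c\<in>?B. (step_in d ?B)\<^sup>*\<^sup>* (\<lambda>_. 0) c" using reach_all[OF V d1] by blast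
  have "\<forall>x\<in>?B. \<forall>y\<in>?B. (adj_in d ?B)\<^sup>*\<^sup>* x y"
  proof (intro ballI)
    fix x y assume "x \<in> ?B" "y \<in> ?B"
    hence "(adj_in d ?B)\<^sup>*\<^sup>* x (\<lambda>_. 0)" "(adj_in d ?B)\<^sup>*\<^sup>* (\<lambda>_. 0) y"
      using reach step_adj by blast+
    thus "(adj_in d ?B)\<^sup>*\<^sup>* x y" by (rule rtranclp_trans)
  qed
  hence ph: "polyhypercube d ?B" unfolding polyhypercube_def using Build_finite Build_sub z by blast
  have dir: "directed d ?B" unfolding directed_def using z reach by blast
  have pl: "\<forall>a\<in>(\<lambda>c. c 0) ` ?B. plateau d ?B a"
  proof
    fix a assume a: "a \<in> (\<lambda>c. c 0) ` ?B"
    hence a': "0 \<le> a" "a < int k" using Build_levels[OF V d1] by auto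
    show "plateau d ?B a" unfolding plateau_def
    proof (intro exI)
      show "stratum ?B a = {c \<in> cells d. c 0 = a \<and> (\<forall>i\<in>{1..<d}.
          (\<lambda>i. loc (\<phi> i) (nat a)) i \<le> c i \<and> c i \<le> (\<lambda>i. hic (\<phi> i) (nat a)) i)}"
        unfolding stratum_def in_Build using a' by auto
    qed
  qed
  show "directed_plateau d ?B" unfolding directed_plateau_def using ph dir pl by blast
  show "width ?B = k" unfolding width_def Build_levels[OF V d1] by simp
  show "lateral_area d ?B = (\<Sum>l\<in>{1..<d}. wt k (\<phi> l))"
    unfolding lateral_area_def by (intro sum.cong refl Build_proj_card[OF V])
qed



lemma Build_inj:
  assumes V: "\<phi> \<in> Valid d k" and W: "\<psi> \<in> Valid d k" and d: "1 \<le> d"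
    and eq: "Build d k \<phi> = Build d k \<psi>"
  shows "\<phi> = \<psi>"
proof -
  have lo: "loc (\<phi> l) t = loc (\<psi> l) t" and hi: "hic (\<phi> l) t = hic (\<psi> l) t"
    if l: "l \<in> {1..<d}" and t: "t < k" for l t
  proof -
    have a: "cor d \<phi> t \<in> Build d k \<psi>" using cor_Build[OF V d t] eq by simp
    have b: "cor d \<psi> t \<in> Build d k \<phi>" using cor_Build[OF W d t] eq by simp
    have "loc (\<psi> l) t \<le> loc (\<phi> l) t" using a l unfolding in_Build cor_def by auto
    moreover have "loc (\<phi> l) t \<le> loc (\<psi> l) t" using b l unfolding in_Build cor_def by auto
    ultimately show "loc (\<phi> l) t = loc (\<psi> l) t" by simp
    have a: "tcor d \<phi> t \<in> Build d k \<psi>" using tcor_Build[OF V d t] eq by simp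
    have b: "tcor d \<psi> t \<in> Build d k \<phi>" using tcor_Build[OF W d t] eq by simp
    have "hic (\<phi> l) t \<le> hic (\<psi> l) t" using a l unfolding in_Build tcor_def by auto
    moreover have "hic (\<psi> l) t \<le> hic (\<phi> l) t" using b l unfolding in_Build tcor_def by auto
    ultimately show "hic (\<phi> l) t = hic (\<psi> l) t" by simp
  qed
  have pt: "\<phi> l t = \<psi> l t" if l: "l \<in> {1..<d}" and t: "t < k" for l t
  proof (rule prod_eqI)
    show "fst (\<phi> l t) = fst (\<psi> l t)" using lo[OF l t] hi[OF l t] unfolding hic_def by simp
    show "snd (\<phi> l t) = snd (\<psi> l t)"
    proof (cases "Suc t < k")
      case True
      thus ?thesis using lo[OF l t] lo[OF l True] unfolding locSuc by simp
    next
      case False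
      hence "\<not> t < k - 1" by simp
      thus ?thesis using Valid_TT[OF V l t] Valid_TT[OF W l t] unfolding TT_def
        by (cases "\<phi> l t", cases "\<psi> l t") auto
    qed
  qed
  have P1: "\<phi> \<in> PiE {1..<d} (\<lambda>l. PiE {..<k} (TT k))" using V unfolding Valid_def .
  have P2: "\<psi> \<in> PiE {1..<d} (\<lambda>l. PiE {..<k} (TT k))" using W unfolding Valid_def .
  show "\<phi> = \<psi>"
  proof (rule PiE_ext[OF P1 P2])
    fix l assume l: "l \<in> {1..<d}"
    have a: "\<phi> l \<in> PiE {..<k} (TT k)" using P1 l by blast
    have b: "\<psi> l \<in> PiE {..<k} (TT k)" using P2 l by blast
    show "\<phi> l = \<psi> l" by (rule PiE_ext[OF a b]) (simp add: pt[OF l])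
  qed
qed

lemma translate_translate: "translate s (translate t Q) = translate (\<lambda>i. t i + s i) Q"
  unfolding translate_def by (auto simp: image_image add.assoc)

lemma translate_zero: "translate (\<lambda>_. 0) Q = Q"
  unfolding translate_def by simp

lemma cells_add: "s \<in> cells d \<Longrightarrow> t \<in> cells d \<Longrightarrow> (\<lambda>i. s i + t i) \<in> cells d"
  unfolding cells_def by auto

lemma cells_minus: "s \<in> cells d \<Longrightarrow> t \<in> cells d \<Longrightarrow> (\<lambda>i. s i - t i) \<in> cells d"
  unfolding cells_def by auto

lemma tc_translate:
  assumes t: "t \<in> cells d"
  shows "transl_class d (translate t Q) = transl_class d Q"
proof (intro equalityI subsetI)
  fix R assume "R \<in> transl_class d (translate t Q)"
  then obtain s where s: "s \<in> cells d" "R = translate s (translate t Q)" unfolding transl_class_def by blast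
  thus "R \<in> transl_class d Q" unfolding transl_class_def translate_translate
    using cells_add[OF t s(1)] by blast
next
  fix R assume "R \<in> transl_class d Q"
  then obtain u where u: "u \<in> cells d" "R = translate u Q" unfolding transl_class_def by blast
  have "R = translate (\<lambda>i. u i - t i) (translate t Q)" unfolding translate_translate u(2) by simp
  thus "R \<in> transl_class d (translate t Q)" unfolding transl_class_def
    using cells_minus[OF u(1) t] by blast
qed

lemma tc_inj:
  assumes z1: "(\<lambda>_. 0) \<in> Q1" and z2: "(\<lambda>_. 0) \<in> Q2"
    and n1: "\<forall>c\<in>Q1. \<forall>i. 0 \<le> c i" and n2: "\<forall>c\<in>Q2. \<forall>i. 0 \<le> c i"
    and eq: "transl_class d Q1 = transl_class d Q2"
  shows "Q1 = Q2"
proof -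
  have "Q1 \<in> transl_class d Q1" unfolding transl_class_def
    using translate_zero[of Q1] by (auto simp: cells_def intro!: bexI[of _ "\<lambda>_. 0"])
  hence "Q1 \<in> transl_class d Q2" using eq by simp
  then obtain t where t: "Q1 = translate t Q2" unfolding transl_class_def by blast
  have "t = (\<lambda>_. 0)"
  proof
    fix i
    have "t \<in> Q1" using z2 unfolding t translate_def by (auto intro!: image_eqI[of _ _ "\<lambda>_. 0"])
    hence ti: "0 \<le> t i" using n1 by blast
    obtain c where c: "c \<in> Q2" "(\<lambda>i. c i + t i) = (\<lambda>_. 0)" using z1 unfolding t translate_def by auto
    have "c i + t i = 0" using fun_cong[OF c(2), of i] by simp
    moreover have "0 \<le> c i" using n2 c(1) by blast
    ultimately show "t i = 0" using ti by simp
  qed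
  thus ?thesis using t translate_zero by simp
qed

lemma Build_nonneg: "\<forall>c\<in>Build d k \<phi>. \<forall>i. 0 \<le> c i"
proof (intro ballI allI)
  fix c i assume c: "c \<in> Build d k \<phi>"
  show "0 \<le> c i"
  proof (cases "i = 0")
    case True thus ?thesis using c unfolding in_Build by simp
  next
    case False
    show ?thesis
    proof (cases "i < d")
      case True
      hence "i \<in> {1..<d}" using False by auto
      hence "loc (\<phi> i) (nat (c 0)) \<le> c i" using c unfolding in_Build by blast
      moreover have "0 \<le> loc (\<phi> i) (nat (c 0))" unfolding loc_def by (rule of_nat_0_le_iff)
      ultimately show ?thesis by simp
    next
      case False thus ?thesis using c unfolding in_Build cells_def by simp
    qed
  qed
qed

lemma lateral_translate: "lateral_area d (translate r Q) = lateral_area d Q"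
  unfolding lateral_area_def
proof (rule sum.cong[OF refl])
  fix l
  have "(\<lambda>c. (c 0, c l)) ` translate r Q = (\<lambda>(x,y). (x + r 0, y + r l)) ` ((\<lambda>c. (c 0, c l)) ` Q)"
    unfolding translate_def by (auto simp: image_image)
  moreover have "inj (\<lambda>(x::int,y::int). (x + r 0, y + r l))" by (auto simp: inj_on_def)
  ultimately show "card ((\<lambda>c. (c 0, c l)) ` translate r Q) = card ((\<lambda>c. (c 0, c l)) ` Q)"
    by (simp add: card_image inj_on_subset)
qed



lemma decomp:
  assumes dp: "directed_plateau d P" and w: "width P = k" and d: "2 \<le> d"
  shows "\<exists>\<phi>\<in>Valid d k. \<exists>r\<in>cells d. P = translate r (Build d k \<phi>)"
proof -
  have ph: "polyhypercube d P" and dir: "directed d P" and pl: "\<forall>a\<in>(\<lambda>c. c 0) ` P. plateau d P a"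
    using dp unfolding directed_plateau_def by auto
  have fin: "finite P" and ne: "P \<noteq> {}" and sub: "P \<subseteq> cells d"
    using ph unfolding polyhypercube_def by auto
  obtain r where r: "r \<in> P" and reach: "\<forall>c\<in>P. (step_in d P)\<^sup>*\<^sup>* r c"
    using dir unfolding directed_def by blast
  have rc: "r \<in> cells d" using r sub by auto
  have ge: "\<forall>i. r i \<le> c i" if c: "c \<in> P" for c
  proof -
    have "(step_in d P)\<^sup>*\<^sup>* r c" using reach c by blast
    thus ?thesis
    proof (induction rule: rtranclp_induct)
      case base thus ?case by simp
    next
      case (step y z)
      then obtain j where zj: "z = y(j := y j + 1)" unfolding step_in_def by blast
      show ?case
      proof
        fix i
        have "y i \<le> z i" unfolding zj by simp
        thus "r i \<le> z i" using step(3) order.trans by blast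
      qed
    qed
  qed
  define L where "L = (\<lambda>c. c 0) ` P"
  have down: "s \<in> L" if c: "c \<in> P" and s: "r 0 \<le> s" "s \<le> c 0" for c s
  proof -
    have "(step_in d P)\<^sup>*\<^sup>* r c" using reach c by blast
    hence "\<forall>s. r 0 \<le> s \<and> s \<le> c 0 \<longrightarrow> s \<in> L"
    proof (induction rule: rtranclp_induct)
      case base
      show ?case using r unfolding L_def by auto
    next
      case (step y z)
      obtain j where zj: "z = y(j := y j + 1)" and zP: "z \<in> P" using step(2) unfolding step_in_def by blast
      have "z 0 \<le> y 0 + 1" using zj by simp
      show ?case
      proof (intro allI impI)
        fix s assume s: "r 0 \<le> s \<and> s \<le> z 0"
        show "s \<in> L"
        proof (cases "s \<le> y 0")
          case True thus ?thesis using step(3) s by blast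
        next
          case False
          hence "s = z 0" using s \<open>z 0 \<le> y 0 + 1\<close> by simp
          thus ?thesis using zP unfolding L_def by blast
        qed
      qed
    qed
    thus ?thesis using s by blast
  qed
  have Lfin: "finite L" and Lne: "L \<noteq> {}" using fin ne unfolding L_def by auto
  define M where "M = Max L"
  have Mmem: "M \<in> L" using Lfin Lne unfolding M_def by simp
  have Leq1: "L = {r 0..M}"
  proof (intro equalityI subsetI)
    fix a assume a: "a \<in> L"
    then obtain c where "c \<in> P" "a = c 0" unfolding L_def by blast
    hence "r 0 \<le> a" using ge by blast
    moreover have "a \<le> M" using a Lfin unfolding M_def by simp
    ultimately show "a \<in> {r 0..M}" by simp
  next
    fix a assume a: "a \<in> {r 0..M}"
    obtain c where "c \<in> P" "M = c 0" using Mmem unfolding L_def by blast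
    thus "a \<in> L" using down a by auto
  qed
  have "card L = k" using w unfolding width_def L_def by simp
  hence "nat (M + 1 - r 0) = k" using Leq1 by simp
  hence Leq: "L = {r 0..<r 0 + int k}" using Leq1 Mmem by auto
  have k1: "1 \<le> k" using Lne Leq by (cases k) auto
  have exlh: "\<forall>t\<in>{..<k}. \<exists>lh. stratum P (r 0 + int t) = {c \<in> cells d. c 0 = r 0 + int t \<and>
      (\<forall>i\<in>{1..<d}. fst lh i \<le> c i \<and> c i \<le> snd lh i)}"
  proof
    fix t assume t: "t \<in> {..<k}"
    hence "r 0 + int t \<in> L" using Leq by simp
    hence "plateau d P (r 0 + int t)" using pl unfolding L_def by blast
    then obtain lo hi where "stratum P (r 0 + int t) = {c \<in> cells d. c 0 = r 0 + int t \<and>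
      (\<forall>i\<in>{1..<d}. lo i \<le> c i \<and> c i \<le> hi i)}" unfolding plateau_def by blast
    thus "\<exists>lh. stratum P (r 0 + int t) = {c \<in> cells d. c 0 = r 0 + int t \<and>
      (\<forall>i\<in>{1..<d}. fst lh i \<le> c i \<and> c i \<le> snd lh i)}" by (intro exI[of _ "(lo, hi)"]) simp
  qed
  obtain LH where LH: "\<forall>t\<in>{..<k}. stratum P (r 0 + int t) = {c \<in> cells d. c 0 = r 0 + int t \<and>
      (\<forall>i\<in>{1..<d}. fst (LH t) i \<le> c i \<and> c i \<le> snd (LH t) i)}" using bchoice[OF exlh] by blast
  define LO where "LO t i = fst (LH t) i" for t i
  define HI where "HI t i = snd (LH t) i" for t i
  have box: "(c \<in> P \<and> c 0 = r 0 + int t) \<longleftrightarrow>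
      (c \<in> cells d \<and> c 0 = r 0 + int t \<and> (\<forall>i\<in>{1..<d}. LO t i \<le> c i \<and> c i \<le> HI t i))"
    if t: "t < k" for t c
  proof -
    have "c \<in> stratum P (r 0 + int t) \<longleftrightarrow> c \<in> {c \<in> cells d. c 0 = r 0 + int t \<and>
      (\<forall>i\<in>{1..<d}. fst (LH t) i \<le> c i \<and> c i \<le> snd (LH t) i)}" using LH t by simp
    thus ?thesis unfolding stratum_def LO_def HI_def by simp
  qed
  have LOHI: "LO t i \<le> HI t i" if t: "t < k" and i: "i \<in> {1..<d}" for t i
  proof -
    have "r 0 + int t \<in> L" using Leq t by simp
    then obtain c where "c \<in> P" "c 0 = r 0 + int t" unfolding L_def by auto
    hence "LO t i \<le> c i \<and> c i \<le> HI t i" using box[OF t, of c] i by blast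
    thus ?thesis by simp
  qed
  have LO0: "LO 0 i = r i" if i: "i \<in> {1..<d}" for i
  proof -
    have "r \<in> P \<and> r 0 = r 0 + int 0" using r by simp
    hence ri: "LO 0 i \<le> r i" using box[OF k1[unfolded One_nat_def, THEN Suc_le_lessD], of r] i by blast
    define z where "z = pt d (r 0) (LO 0)"
    have "z \<in> cells d" unfolding z_def using pt_cells d by simp
    moreover have "z 0 = r 0 + int 0" unfolding z_def by simp
    moreover have "\<forall>j\<in>{1..<d}. LO 0 j \<le> z j \<and> z j \<le> HI 0 j" unfolding z_def
      using LOHI k1 by auto
    ultimately have "z \<in> P" using box[of 0 z] k1 by auto
    hence "r i \<le> z i" using ge by blast
    hence "r i \<le> LO 0 i" unfolding z_def using i by simp
    thus ?thesis using ri by simp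
  qed
  have chain: "LO t i \<le> LO (Suc t) i \<and> LO (Suc t) i \<le> HI t i" if t: "Suc t < k" and i: "i \<in> {1..<d}" for t i
  proof -
    define m where "m = pt d (r 0 + int (Suc t)) (LO (Suc t))"
    have mc: "m \<in> cells d" unfolding m_def using pt_cells d by simp
    have m0: "m 0 = r 0 + int (Suc t)" unfolding m_def by simp
    have "\<forall>j\<in>{1..<d}. LO (Suc t) j \<le> m j \<and> m j \<le> HI (Suc t) j" unfolding m_def
      using LOHI t by auto
    hence mP: "m \<in> P" using box[OF t, of m] mc m0 by blast
    have mr: "m \<noteq> r" using m0 by auto
    have rm: "(step_in d P)\<^sup>*\<^sup>* r m" using reach mP by blast
    have "\<exists>x. step_in d P x m" using rtranclp.cases[OF rm] mr by blast
    then obtain x where "step_in d P x m" by blast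
    then obtain j where xP: "x \<in> P" and j: "j < d" and mx: "m = x(j := x j + 1)" unfolding step_in_def by blast
    have mj: "m j = x j + 1" using mx by simp
    have mo: "m i' = x i'" if "i' \<noteq> j" for i' using mx that by simp
    show ?thesis
    proof (cases "j = 0")
      case True
      have "x 0 = r 0 + int t" using mj m0 True by simp
      moreover have "x i = LO (Suc t) i" using mo[of i] i True unfolding m_def by simp
      have tk: "t < k" using t by simp
      have "\<forall>i\<in>{1..<d}. LO t i \<le> x i \<and> x i \<le> HI t i"
        using box[OF tk, of x] xP \<open>x 0 = r 0 + int t\<close> by blast
      hence "LO t i \<le> x i \<and> x i \<le> HI t i" using i by blast
      thus ?thesis using \<open>x i = LO (Suc t) i\<close> by simp
    next
      case False
      hence jd: "j \<in> {1..<d}" using j by auto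
      have "x 0 = r 0 + int (Suc t)" using mo[of 0] m0 False by simp
      hence "LO (Suc t) j \<le> x j" using box[OF t, of x] xP jd by blast
      moreover have "m j = LO (Suc t) j" using jd unfolding m_def by simp
      ultimately show ?thesis using mj by simp
    qed
  qed
  define \<phi> where "\<phi> = (\<lambda>l\<in>{1..<d}. \<lambda>t\<in>{..<k}. (nat (HI t l - LO t l + 1),
      if t < k - 1 then nat (LO (Suc t) l - LO t l) else 0))"
  have \<phi>l: "\<phi> l t = (nat (HI t l - LO t l + 1), if t < k - 1 then nat (LO (Suc t) l - LO t l) else 0)"
    if "l \<in> {1..<d}" "t < k" for l t using that unfolding \<phi>_def by simp
  have V: "\<phi> \<in> Valid d k"
    unfolding Valid_def \<phi>_def
  proof (rule restrict_PiE_iff[THEN iffD2], rule ballI)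
    fix l assume l: "l \<in> {1..<d}"
    show "(\<lambda>t\<in>{..<k}. (nat (HI t l - LO t l + 1), if t < k - 1 then nat (LO (Suc t) l - LO t l) else 0))
       \<in> PiE {..<k} (TT k)"
    proof (rule restrict_PiE_iff[THEN iffD2], rule ballI)
      fix t assume t: "t \<in> {..<k}"
      have "LO t l \<le> HI t l" using LOHI t l by simp
      moreover have "t < k - 1 \<Longrightarrow> LO t l \<le> LO (Suc t) l \<and> LO (Suc t) l \<le> HI t l" using chain l by simp
      ultimately show "(nat (HI t l - LO t l + 1), if t < k - 1 then nat (LO (Suc t) l - LO t l) else 0) \<in> TT k t"
        unfolding TT_def by auto
    qed
  qed
  have locq: "t < k \<Longrightarrow> loc (\<phi> l) t = LO t l - r l" if l: "l \<in> {1..<d}" for l t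
  proof (induction t)
    case 0 thus ?case using LO0[OF l] by simp
  next
    case (Suc t)
    hence "t < k - 1" "t < k" by auto
    hence "snd (\<phi> l t) = nat (LO (Suc t) l - LO t l)" using \<phi>l[OF l] by simp
    moreover have "LO t l \<le> LO (Suc t) l" using chain[OF Suc.prems l] by simp
    ultimately show ?case using Suc.IH \<open>t < k\<close> by (simp add: locSuc)
  qed
  have hicq: "hic (\<phi> l) t = HI t l - r l" if l: "l \<in> {1..<d}" and t: "t < k" for l t
    using locq[OF l t] \<phi>l[OF l t] LOHI[OF t l] unfolding hic_def by simp
  have "P = translate r (Build d k \<phi>)"
  proof (intro equalityI subsetI)
    fix c assume c: "c \<in> P"
    define b where "b = (\<lambda>i. c i - r i)"
    have cc: "c \<in> cells d" using c sub by auto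
    have "c 0 \<in> L" using c unfolding L_def by blast
    hence c0: "r 0 \<le> c 0" "c 0 < r 0 + int k" using Leq by auto
    define t where "t = nat (c 0 - r 0)"
    have tk: "t < k" and ct: "c 0 = r 0 + int t" using c0 unfolding t_def by auto
    have bnd: "\<forall>i\<in>{1..<d}. LO t i \<le> c i \<and> c i \<le> HI t i" using box[OF tk, of c] c ct by blast
    have "b \<in> Build d k \<phi>" unfolding in_Build
    proof (intro conjI ballI)
      show "b \<in> cells d" unfolding b_def using cells_minus[OF cc rc] .
      show "0 \<le> b 0" "b 0 < int k" unfolding b_def using ct tk by auto
      fix l assume l: "l \<in> {1..<d}"
      have nb: "nat (b 0) = t" unfolding b_def using ct by simp
      have "LO t l \<le> c l \<and> c l \<le> HI t l" using bnd l by blast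
      hence "loc (\<phi> l) t \<le> b l \<and> b l \<le> hic (\<phi> l) t" using locq[OF l tk] hicq[OF l tk] unfolding b_def by simp
      thus "loc (\<phi> l) (nat (b 0)) \<le> b l" "b l \<le> hic (\<phi> l) (nat (b 0))" unfolding nb by auto
    qed
    moreover have "c = (\<lambda>i. b i + r i)" unfolding b_def by simp
    ultimately show "c \<in> translate r (Build d k \<phi>)" unfolding translate_def by blast
  next
    fix c assume "c \<in> translate r (Build d k \<phi>)"
    then obtain b where b: "b \<in> Build d k \<phi>" "c = (\<lambda>i. b i + r i)" unfolding translate_def by blast
    have bb: "b \<in> cells d \<and> 0 \<le> b 0 \<and> b 0 < int k \<and> (\<forall>l\<in>{1..<d}. loc (\<phi> l) (nat (b 0)) \<le> b l \<and> b l \<le> hic (\<phi> l) (nat (b 0)))"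
      using b(1) unfolding in_Build .
    define t where "t = nat (b 0)"
    have tk: "t < k" and bt: "b 0 = int t" using bb unfolding t_def by auto
    have cc: "c \<in> cells d" unfolding b(2) using cells_add[of b d r] bb rc by simp
    have c0: "c 0 = r 0 + int t" using b(2) bt by simp
    have "\<forall>i\<in>{1..<d}. LO t i \<le> c i \<and> c i \<le> HI t i"
    proof
      fix l assume l: "l \<in> {1..<d}"
      have "loc (\<phi> l) t \<le> b l \<and> b l \<le> hic (\<phi> l) t" using bb l unfolding t_def by blast
      thus "LO t l \<le> c l \<and> c l \<le> HI t l" unfolding locq[OF l tk] hicq[OF l tk] b(2) by simp
    qed
    thus "c \<in> P" using box[OF tk, of c] cc c0 by blast
  qed
  thus ?thesis using V rc by blast
qed



theorem theorem2:
  fixes d k n :: nat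
  assumes "d \<ge> 3" and "k \<ge> 1" and "n \<ge> (d - 1) * k"
  shows "p_count d k n =
    (\<Sum>j\<in>{j :: nat \<Rightarrow> nat. (\<forall>i. i \<notin> {1..<d} \<longrightarrow> j i = 0) \<and> (\<Sum>l\<in>{1..<d}. j l) = n}.
       \<Prod>l\<in>{1..<d}. ibinom (int (j l) + int k - 2) (int (j l) - int k))"
proof -
  have d2: "2 \<le> d" and d1: "1 \<le> d" and k: "1 \<le> k" using assms by auto
  define A where "A = {P. directed_plateau d P \<and> width P = k \<and> lateral_area d P = n}"
  define VN where "VN = {\<phi> \<in> Valid d k. (\<Sum>l\<in>{1..<d}. wt k (\<phi> l)) = n}"
  have img: "transl_class d ` A = (\<lambda>\<phi>. transl_class d (Build d k \<phi>)) ` VN"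
  proof (intro equalityI subsetI)
    fix X assume "X \<in> transl_class d ` A"
    then obtain P where P: "P \<in> A" "X = transl_class d P" by blast
    have Pd: "directed_plateau d P" "width P = k" "lateral_area d P = n" using P(1) unfolding A_def by auto
    obtain \<phi> r where \<phi>: "\<phi> \<in> Valid d k" "r \<in> cells d" "P = translate r (Build d k \<phi>)"
      using decomp[OF Pd(1) Pd(2) d2] by blast
    have "n = lateral_area d (Build d k \<phi>)" using Pd(3) \<phi>(3) lateral_translate by simp
    also have "\<dots> = (\<Sum>l\<in>{1..<d}. wt k (\<phi> l))" using Build_good(3)[OF \<phi>(1) d2 k] .
    finally have "\<phi> \<in> VN" unfolding VN_def using \<phi>(1) by simp
    moreover have "X = transl_class d (Build d k \<phi>)" using P(2) \<phi>(3) tc_translate[OF \<phi>(2)] by simp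
    ultimately show "X \<in> (\<lambda>\<phi>. transl_class d (Build d k \<phi>)) ` VN" by blast
  next
    fix X assume "X \<in> (\<lambda>\<phi>. transl_class d (Build d k \<phi>)) ` VN"
    then obtain \<phi> where \<phi>: "\<phi> \<in> VN" "X = transl_class d (Build d k \<phi>)" by blast
    have V: "\<phi> \<in> Valid d k" and s: "(\<Sum>l\<in>{1..<d}. wt k (\<phi> l)) = n" using \<phi>(1) unfolding VN_def by auto
    have "Build d k \<phi> \<in> A" unfolding A_def using Build_good[OF V d2 k] s by simp
    thus "X \<in> transl_class d ` A" using \<phi>(2) by blast
  qed
  have inj: "inj_on (\<lambda>\<phi>. transl_class d (Build d k \<phi>)) VN"
  proof (rule inj_onI)
    fix \<phi> \<psi> assume a: "\<phi> \<in> VN" "\<psi> \<in> VN" and eq: "transl_class d (Build d k \<phi>) = transl_class d (Build d k \<psi>)"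
    have V: "\<phi> \<in> Valid d k" "\<psi> \<in> Valid d k" using a unfolding VN_def by auto
    have "Build d k \<phi> = Build d k \<psi>"
      by (rule tc_inj[OF zero_Build[OF V(1) d1 k] zero_Build[OF V(2) d1 k] Build_nonneg Build_nonneg eq])
    thus "\<phi> = \<psi>" using Build_inj[OF V d1] by simp
  qed
  have "p_count d k n = card VN"
    unfolding p_count_def A_def[symmetric] img using card_image[OF inj] .
  also have "\<dots> = card {\<phi> \<in> PiE {1..<d} (\<lambda>l. PiE {..<k} (TT k)). (\<Sum>l\<in>{1..<d}. wt k (\<phi> l)) = n}"
    unfolding VN_def Valid_def ..
  also have "\<dots> = (\<Sum>j\<in>compo {1..<d} n. \<Prod>l\<in>{1..<d}. card {s \<in> PiE {..<k} (TT k). wt k s = j l})"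
    by (rule GL) (auto simp: col_fin)
  also have "\<dots> = (\<Sum>j\<in>compo {1..<d} n. \<Prod>l\<in>{1..<d}. ibinom (int (j l) + int k - 2) (int (j l) - int k))"
    using col_count[OF k] by simp
  finally show ?thesis unfolding compo_def .
qed

end
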